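(* Let $\mathcal G$ be a shortest-path game in which $\mathrm{Val}^{\mathrm d}(v)\neq+\infty$ and $\overline{\mathrm{Val}}^{\mathrm m}(v)\neq+\infty$ for all vertices $v$, and let $\rho$ be a memoryless strategy of Min such that $\mathbb P^{\rho,\tau}_v(\Diamond T)=1$ for every vertex $v$ and every memoryless strategy $\tau$ of Max. Let $\widetilde{\mathcal G}$ be the game graph defined below. Then (i) for every vertex $v$, every finite path in $\widetilde{\mathcal G}$ from $v$ ending in $T$ (at its first visit to $T$) has total weight at most $\mathrm{Val}^{\mathrm m,\rho}(v)$; and (ii) every cycle in $\widetilde{\mathcal G}$ has non-positive total weight.
   Context: A shortest-path game is $\mathcal G=(V_{\mathrm{Max}},V_{\mathrm{Min}},T,E,w)$ with finite $V=V_{\mathrm{Max}}\uplus V_{\mathrm{Min}}\uplus T$, edges $E\subseteq (V\setminus T)\times V$ with every non-target vertex having a successor, and integer weights $w\colon E\to\mathbb Z$. Plays from $v$ are finite paths ending at their first visit to $T$ (total payoff $\mathrm{TP}$ = sum of weights) or infinite paths avoiding $T$ ($\mathrm{TP}=+\infty$). Strategies of Min (resp. Max) map finite paths ending in $V_{\mathrm{Min}}$ (resp. $V_{\mathrm{Max}}$) to distributions on successors of the last vertex; deterministic = always Dirac, memoryless = depends only on the last vertex. $\mathrm{Val}^{\mathrm d}(v)=\inf_\sigma\sup_\tau\mathrm{TP}(\text{unique play from } v \text{ conforming to } \sigma,\tau)$ over deterministic strategies. For memoryless $\rho,\tau$, $\mathbb P^{\rho,\tau}_v,\mathbb E^{\rho,\tau}_v$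 refer to the induced Markov chain; $\mathrm{Val}^{\mathrm m,\rho}(v)=\sup_\tau\mathbb E^{\rho,\tau}_v(\mathrm{TP})$ over memoryless $\tau$, $\overline{\mathrm{Val}}^{\mathrm m}(v)=\inf_\rho\mathrm{Val}^{\mathrm m,\rho}(v)$. For $v\in V_{\mathrm{Min}}$ let $\widetilde E(v)=\arg\min_{v'\in\mathrm{supp}(\rho(v))}\big[w(v,v')+\mathrm{Val}^{\mathrm m,\rho}(v')\big]$, and let $\widetilde{\mathcal G}$ be obtained from $\mathcal G$ by removing every edge $(v,v')$ with $v\in V_{\mathrm{Min}}$ and $v'\notin\widetilde E(v)$. *)

theory Defs
  imports "HOL-Probability.Probability"
begin

record 'v game =
  VMax :: "'v set"
  VMin :: "'v set"
  Tgt  :: "'v set"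
  Ed   :: "('v \<times> 'v) set"
  wt   :: "'v \<Rightarrow> 'v \<Rightarrow> int"

definition Vert :: "('v, 'a) game_scheme \<Rightarrow> 'v set" where
  "Vert G = VMax G \<union> VMin G \<union> Tgt G"

definition sp_game :: "('v, 'a) game_scheme \<Rightarrow> bool" where
  "sp_game G \<longleftrightarrow> finite (Vert G)
     \<and> VMax G \<inter> VMin G = {} \<and> VMax G \<inter> Tgt G = {} \<and> VMin G \<inter> Tgt G = {}
     \<and> Ed G \<subseteq> (Vert G - Tgt G) \<times> Vert G
     \<and> (\<forall>v \<in> Vert G - Tgt G. \<exists>v'. (v, v') \<in> Ed G)"

definition is_path :: "('v \<times> 'v) set \<Rightarrow> 'v list \<Rightarrow> bool" where
  "is_path E p \<longleftrightarrow> p \<noteq> [] \<and> (\<forall>i. Suc i < length p \<longrightarrow> (p ! i, p ! Suc i) \<in> E)"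

definition path_weight :: "('v, 'a) game_scheme \<Rightarrow> 'v list \<Rightarrow> int" where
  "path_weight G p = (\<Sum>i < length p - 1. wt G (p ! i) (p ! Suc i))"

definition is_play :: "('v, 'a) game_scheme \<Rightarrow> 'v \<Rightarrow> 'v list \<Rightarrow> bool" where
  "is_play G v p \<longleftrightarrow> is_path (Ed G) p \<and> hd p = v \<and> last p \<in> Tgt G
     \<and> (\<forall>i < length p - 1. p ! i \<notin> Tgt G)"

definition is_cycle :: "('v, 'a) game_scheme \<Rightarrow> 'v list \<Rightarrow> bool" where
  "is_cycle G p \<longleftrightarrow> is_path (Ed G) p \<and> length p \<ge> 2 \<and> hd p = last p"

definition det_strat :: "('v, 'a) game_scheme \<Rightarrow> 'v set \<Rightarrow> ('v list \<Rightarrow> 'v) \<Rightarrow> bool" where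
  "det_strat G S \<sigma> \<longleftrightarrow> (\<forall>p. p \<noteq> [] \<and> last p \<in> S \<longrightarrow> (last p, \<sigma> p) \<in> Ed G)"

fun dplay :: "('v, 'a) game_scheme \<Rightarrow> ('v list \<Rightarrow> 'v) \<Rightarrow> ('v list \<Rightarrow> 'v) \<Rightarrow> 'v \<Rightarrow> nat \<Rightarrow> 'v list" where
  "dplay G \<sigma> \<tau> v 0 = [v]"
| "dplay G \<sigma> \<tau> v (Suc n) = (let p = dplay G \<sigma> \<tau> v n; u = last p in
     if u \<in> Tgt G then p else p @ [if u \<in> VMin G then \<sigma> p else \<tau> p])"

definition TP_det :: "('v, 'a) game_scheme \<Rightarrow> ('v list \<Rightarrow> 'v) \<Rightarrow> ('v list \<Rightarrow> 'v) \<Rightarrow> 'v \<Rightarrow> ereal" where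
  "TP_det G \<sigma> \<tau> v = (if \<exists>n. last (dplay G \<sigma> \<tau> v n) \<in> Tgt G
      then ereal (real_of_int (path_weight G (dplay G \<sigma> \<tau> v (LEAST n. last (dplay G \<sigma> \<tau> v n) \<in> Tgt G))))
      else \<infinity>)"

definition Val_d :: "('v, 'a) game_scheme \<Rightarrow> 'v \<Rightarrow> ereal" where
  "Val_d G v = (INF \<sigma> \<in> {\<sigma>. det_strat G (VMin G) \<sigma>}. SUP \<tau> \<in> {\<tau>. det_strat G (VMax G) \<tau>}. TP_det G \<sigma> \<tau> v)"

definition ml_strat :: "('v, 'a) game_scheme \<Rightarrow> 'v set \<Rightarrow> ('v \<Rightarrow> 'v pmf) \<Rightarrow> bool" where
  "ml_strat G S \<rho> \<longleftrightarrow> (\<forall>u \<in> S. set_pmf (\<rho> u) \<subseteq> {u'. (u, u') \<in> Ed G})"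

definition trans_pmf :: "('v, 'a) game_scheme \<Rightarrow> ('v \<Rightarrow> 'v pmf) \<Rightarrow> ('v \<Rightarrow> 'v pmf) \<Rightarrow> 'v \<Rightarrow> 'v pmf" where
  "trans_pmf G \<rho> \<tau> u = (if u \<in> VMin G then \<rho> u else if u \<in> VMax G then \<tau> u else return_pmf u)"

text \<open>Probability of the cylinder set of a finite path (starting from its first vertex).\<close>
definition path_prob :: "('v, 'a) game_scheme \<Rightarrow> ('v \<Rightarrow> 'v pmf) \<Rightarrow> ('v \<Rightarrow> 'v pmf) \<Rightarrow> 'v list \<Rightarrow> real" where
  "path_prob G \<rho> \<tau> p = (\<Prod>i < length p - 1. pmf (trans_pmf G \<rho> \<tau> (p ! i)) (p ! Suc i))"

text \<open>P^{rho,tau}_v(eventually T): sum over the (disjoint) cylinders of finite plays.\<close>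
definition reach_prob :: "('v, 'a) game_scheme \<Rightarrow> ('v \<Rightarrow> 'v pmf) \<Rightarrow> ('v \<Rightarrow> 'v pmf) \<Rightarrow> 'v \<Rightarrow> real" where
  "reach_prob G \<rho> \<tau> v = infsum (path_prob G \<rho> \<tau>) {p. is_play G v p}"

text \<open>E^{rho,tau}_v(TP): +infinity if T is missed with positive probability (TP = +infinity there),
  otherwise the (absolutely convergent) sum over finite plays.\<close>
definition exp_TP :: "('v, 'a) game_scheme \<Rightarrow> ('v \<Rightarrow> 'v pmf) \<Rightarrow> ('v \<Rightarrow> 'v pmf) \<Rightarrow> 'v \<Rightarrow> ereal" where
  "exp_TP G \<rho> \<tau> v = (if reach_prob G \<rho> \<tau> v = 1
      then ereal (infsum (\<lambda>p. path_prob G \<rho> \<tau> p * real_of_int (path_weight G p)) {p. is_play G v p})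
      else \<infinity>)"

definition Val_m_rho :: "('v, 'a) game_scheme \<Rightarrow> ('v \<Rightarrow> 'v pmf) \<Rightarrow> 'v \<Rightarrow> ereal" where
  "Val_m_rho G \<rho> v = (SUP \<tau> \<in> {\<tau>. ml_strat G (VMax G) \<tau>}. exp_TP G \<rho> \<tau> v)"

definition Val_m_bar :: "('v, 'a) game_scheme \<Rightarrow> 'v \<Rightarrow> ereal" where
  "Val_m_bar G v = (INF \<rho> \<in> {\<rho>. ml_strat G (VMin G) \<rho>}. Val_m_rho G \<rho> v)"

definition E_tilde :: "('v, 'a) game_scheme \<Rightarrow> ('v \<Rightarrow> 'v pmf) \<Rightarrow> 'v \<Rightarrow> 'v set" where
  "E_tilde G \<rho> u = {u' \<in> set_pmf (\<rho> u). \<forall>u'' \<in> set_pmf (\<rho> u).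
      ereal (real_of_int (wt G u u')) + Val_m_rho G \<rho> u' \<le> ereal (real_of_int (wt G u u'')) + Val_m_rho G \<rho> u''}"

definition tilde_game :: "('v, 'a) game_scheme \<Rightarrow> ('v \<Rightarrow> 'v pmf) \<Rightarrow> ('v, 'a) game_scheme" where
  "tilde_game G \<rho> = G\<lparr>Ed := {(u, u') \<in> Ed G. u \<in> VMin G \<longrightarrow> u' \<in> E_tilde G \<rho> u}\<rparr>"

end

theory Submission imports Defs begin

definition K :: "('v, 'a) game_scheme \<Rightarrow> ('v \<Rightarrow> 'v pmf) \<Rightarrow> ('v \<Rightarrow> 'v pmf) \<Rightarrow> 'v \<Rightarrow> 'v \<Rightarrow> real" where
  "K G \<rho> \<tau> x y = pmf (trans_pmf G \<rho> \<tau> x) y"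

lemma is_play_ne: "is_play G v p \<Longrightarrow> p \<noteq> [] \<and> hd p = v"
  by (simp add: is_play_def is_path_def)

lemma is_play_single: "is_play G v [u] \<longleftrightarrow> u = v \<and> v \<in> Tgt G"
  by (auto simp: is_play_def is_path_def)

lemma all_Suc_split: "(\<forall>i. P i) \<longleftrightarrow> P 0 \<and> (\<forall>i. P (Suc i))"
  by (metis not0_implies_Suc)

lemma is_play_Cons:
  assumes "q \<noteq> []"
  shows "is_play G v (u # q) \<longleftrightarrow> u = v \<and> v \<notin> Tgt G \<and> (v, hd q) \<in> Ed G \<and> is_play G (hd q) q"
proof -
  have A: "(\<forall>i. Suc i < length (u # q) \<longrightarrow> ((u # q) ! i, (u # q) ! Suc i) \<in> Ed G)
      \<longleftrightarrow> (u, hd q) \<in> Ed G \<and> (\<forall>i. Suc i < length q \<longrightarrow> (q ! i, q ! Suc i) \<in> Ed G)"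
    using assms by (subst all_Suc_split) (simp add: hd_conv_nth)
  have B: "(\<forall>i < length (u # q) - 1. (u # q) ! i \<notin> Tgt G)
      \<longleftrightarrow> u \<notin> Tgt G \<and> (\<forall>i < length q - 1. q ! i \<notin> Tgt G)"
    using assms by (subst all_Suc_split) (auto simp: less_diff_conv)
  show ?thesis using assms A B unfolding is_play_def is_path_def by auto
qed

lemma path_prob_single[simp]: "path_prob G \<rho> \<tau> [v] = 1"
  by (simp add: path_prob_def)

lemma path_weight_single[simp]: "path_weight G [v] = 0"
  by (simp add: path_weight_def)

lemma path_prob_Cons:
  assumes "q \<noteq> []"
  shows "path_prob G \<rho> \<tau> (v # q) = K G \<rho> \<tau> v (hd q) * path_prob G \<rho> \<tau> q"
proof -
  obtain n where n: "length q = Suc n" using assms by (cases q) auto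
  have l: "length (v # q) - 1 = Suc n" using n by simp
  show ?thesis unfolding path_prob_def K_def
    by (simp only: l prod.lessThan_Suc_shift) (simp add: hd_conv_nth assms n)
qed

lemma path_weight_Cons:
  assumes "q \<noteq> []"
  shows "path_weight G (v # q) = wt G v (hd q) + path_weight G q"
proof -
  obtain n where n: "length q = Suc n" using assms by (cases q) auto
  have l: "length (v # q) - 1 = Suc n" using n by simp
  show ?thesis unfolding path_weight_def
    by (simp only: l sum.lessThan_Suc_shift) (simp add: hd_conv_nth assms n)
qed


definition succs :: "('v, 'a) game_scheme \<Rightarrow> 'v \<Rightarrow> 'v set" where
  "succs G x = {y. (x, y) \<in> Ed G}"

lemma plays_Tgt: "v \<in> Tgt G \<Longrightarrow> {p. is_play G v p} = {[v]}"
proof safe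
  fix p assume v: "v \<in> Tgt G" and p: "is_play G v p"
  then obtain q where q: "p = v # q" using is_play_ne[OF p] by (cases p) auto
  show "p = [v]"
  proof (cases "q = []")
    case False with p q v show ?thesis by (simp add: is_play_Cons)
  qed (simp add: q)
qed (simp add: is_play_single)

lemma plays_NT: "v \<notin> Tgt G \<Longrightarrow> {p. is_play G v p} = (\<Union>z\<in>succs G v. Cons v ` {q. is_play G z q})"
proof safe
  fix p assume v: "v \<notin> Tgt G" and p: "is_play G v p"
  then obtain q where q: "p = v # q" using is_play_ne[OF p] by (cases p) auto
  have "q \<noteq> []" using p q v by (auto simp: is_play_single)
  then show "p \<in> (\<Union>z\<in>succs G v. Cons v ` {q. is_play G z q})"
    using p q by (auto simp: is_play_Cons succs_def)
next
  fix z q assume "v \<notin> Tgt G" "z \<in> succs G v" "is_play G z q"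
  then show "is_play G v (v # q)"
    using is_play_ne[of G z q] by (auto simp: is_play_Cons succs_def)
qed

fun uu :: "('v, 'a) game_scheme \<Rightarrow> ('v \<Rightarrow> 'v pmf) \<Rightarrow> ('v \<Rightarrow> 'v pmf) \<Rightarrow> nat \<Rightarrow> 'v \<Rightarrow> real" where
  "uu G \<rho> \<tau> 0 y = (if y \<in> Vert G - Tgt G then 1 else 0)"
| "uu G \<rho> \<tau> (Suc k) y = (if y \<in> Vert G - Tgt G then (\<Sum>z\<in>Vert G. K G \<rho> \<tau> y z * uu G \<rho> \<tau> k z) else 0)"

declare uu.simps[simp del]

definition phi :: "('v, 'a) game_scheme \<Rightarrow> ('v \<Rightarrow> 'v pmf) \<Rightarrow> ('v \<Rightarrow> 'v pmf) \<Rightarrow> nat \<Rightarrow> 'v \<Rightarrow> real" where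
  "phi G \<rho> \<tau> n y = (\<Sum>k<n. uu G \<rho> \<tau> k y)"

definition EE :: "('v, 'a) game_scheme \<Rightarrow> ('v \<Rightarrow> 'v pmf) \<Rightarrow> ('v \<Rightarrow> 'v pmf) \<Rightarrow> 'v \<Rightarrow> real" where
  "EE G \<rho> \<tau> v = infsum (\<lambda>p. path_prob G \<rho> \<tau> p * real_of_int (path_weight G p)) {p. is_play G v p}"

lemma sum_lessThan_add: "(\<Sum>k<(n::nat) + m. f k) = (\<Sum>k<m. f k) + (\<Sum>k<n. f (k + m))"
  by (induction n) (auto simp: add.commute add.left_commute)

context
  fixes G :: "('v, 'a) game_scheme" and \<rho> \<tau> :: "'v \<Rightarrow> 'v pmf"
  assumes sp: "sp_game G" and mr: "ml_strat G (VMin G) \<rho>" and mt: "ml_strat G (VMax G) \<tau>"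
begin

lemma finV: "finite (Vert G)"
  using sp by (simp add: sp_game_def)

lemma edge_V: "(x, y) \<in> Ed G \<Longrightarrow> x \<in> Vert G - Tgt G \<and> y \<in> Vert G"
  using sp by (auto simp: sp_game_def)

lemma K_nonneg: "0 \<le> K G \<rho> \<tau> x y"
  by (simp add: K_def)

lemma set_trans: "x \<in> Vert G - Tgt G \<Longrightarrow> set_pmf (trans_pmf G \<rho> \<tau> x) \<subseteq> succs G x"
  using sp mr mt unfolding sp_game_def ml_strat_def trans_pmf_def Vert_def succs_def by auto

lemma succs_V: "succs G x \<subseteq> Vert G"
  using edge_V by (auto simp: succs_def)

lemma K_edge: "x \<in> Vert G - Tgt G \<Longrightarrow> K G \<rho> \<tau> x y \<noteq> 0 \<Longrightarrow> y \<in> succs G x"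
  using set_trans[of x] by (auto simp: K_def set_pmf_iff)

lemma K_sum: "x \<in> Vert G - Tgt G \<Longrightarrow> (\<Sum>y\<in>Vert G. K G \<rho> \<tau> x y) = 1"
  unfolding K_def using set_trans[of x] succs_V[of x] finV by (intro sum_pmf_eq_1) auto

lemma path_prob_nonneg: "0 \<le> path_prob G \<rho> \<tau> p"
  by (simp add: path_prob_def prod_nonneg)

lemma closed_zero:
  assumes S: "S \<subseteq> Vert G - Tgt G" and cl: "\<forall>x\<in>S. \<forall>z. K G \<rho> \<tau> x z \<noteq> 0 \<longrightarrow> z \<in> S"
    and y: "y \<in> S" and p: "is_play G y p"
  shows "path_prob G \<rho> \<tau> p = 0"
proof (rule ccontr)
  assume "path_prob G \<rho> \<tau> p \<noteq> 0"
  then have nz: "\<forall>i < length p - 1. K G \<rho> \<tau> (p ! i) (p ! Suc i) \<noteq> 0"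
    unfolding path_prob_def K_def by (auto simp: prod_zero_iff)
  have ne: "p \<noteq> []" "hd p = y" using is_play_ne[OF p] by auto
  have "\<forall>i. i < length p \<longrightarrow> p ! i \<in> S"
  proof
    fix i show "i < length p \<longrightarrow> p ! i \<in> S"
    proof (induction i)
      case 0 then show ?case using ne y by (simp add: hd_conv_nth)
    next
      case (Suc i)
      show ?case
      proof
        assume i: "Suc i < length p"
        then have "p ! i \<in> S" using Suc by simp
        moreover have "K G \<rho> \<tau> (p ! i) (p ! Suc i) \<noteq> 0" using nz i by simp
        ultimately show "p ! Suc i \<in> S" using cl by blast
      qed
    qed
  qed
  then have "last p \<in> S" using ne by (simp add: last_conv_nth)
  moreover have "last p \<in> Tgt G" using p by (simp add: is_play_def)
  ultimately show False using S by auto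
qed

context
  assumes reach: "\<forall>v\<in>Vert G. reach_prob G \<rho> \<tau> v = 1"
begin

lemma closed_empty:
  assumes S: "S \<subseteq> Vert G - Tgt G" and cl: "\<forall>x\<in>S. \<forall>z. K G \<rho> \<tau> x z \<noteq> 0 \<longrightarrow> z \<in> S"
  shows "S = {}"
proof (rule ccontr)
  assume "S \<noteq> {}"
  then obtain y where y: "y \<in> S" by auto
  have "reach_prob G \<rho> \<tau> y = infsum (\<lambda>p. 0::real) {p. is_play G y p}"
    unfolding reach_prob_def using closed_zero[OF S cl y] by (intro infsum_cong) auto
  then show False using reach y S by auto
qed

lemma max_principle:
  fixes h :: "'v \<Rightarrow> real"
  assumes T: "\<forall>u\<in>Vert G. u \<in> Tgt G \<longrightarrow> h u \<le> 0"
    and N: "\<forall>u\<in>Vert G - Tgt G. h u \<le> (\<Sum>z\<in>Vert G. K G \<rho> \<tau> u z * h z)"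
    and v: "v \<in> Vert G"
  shows "h v \<le> 0"
proof (rule ccontr)
  assume hv: "\<not> h v \<le> 0"
  define M where "M = Max (h ` Vert G)"
  have hM: "\<And>u. u \<in> Vert G \<Longrightarrow> h u \<le> M" unfolding M_def using finV by auto
  have "M \<in> h ` Vert G" unfolding M_def using finV v by (intro Max_in) auto
  then obtain x0 where x0: "x0 \<in> Vert G" "h x0 = M" by auto
  have Mpos: "M > 0" using hM[OF v] hv by linarith
  define S where "S = {u\<in>Vert G. h u = M}"
  have S: "S \<subseteq> Vert G - Tgt G" using T Mpos unfolding S_def by force
  have cl: "\<forall>x\<in>S. \<forall>z. K G \<rho> \<tau> x z \<noteq> 0 \<longrightarrow> z \<in> S"
  proof (intro ballI allI impI)
    fix x z assume x: "x \<in> S" and K: "K G \<rho> \<tau> x z \<noteq> 0"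
    have xN: "x \<in> Vert G - Tgt G" using x S by auto
    have zV: "z \<in> Vert G" using K_edge[OF xN K] succs_V by auto
    have "(\<Sum>w\<in>Vert G. K G \<rho> \<tau> x w * (M - h w)) = M * (\<Sum>w\<in>Vert G. K G \<rho> \<tau> x w) - (\<Sum>w\<in>Vert G. K G \<rho> \<tau> x w * h w)"
      by (simp add: algebra_simps sum_subtractf sum_distrib_left)
    also have "\<dots> \<le> 0" using K_sum[OF xN] N xN x unfolding S_def by auto
    finally have le: "(\<Sum>w\<in>Vert G. K G \<rho> \<tau> x w * (M - h w)) \<le> 0" .
    have nn: "\<forall>w\<in>Vert G. 0 \<le> K G \<rho> \<tau> x w * (M - h w)" using hM K_nonneg by auto
    then have "0 \<le> (\<Sum>w\<in>Vert G. K G \<rho> \<tau> x w * (M - h w))" by (simp add: sum_nonneg)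
    then have "(\<Sum>w\<in>Vert G. K G \<rho> \<tau> x w * (M - h w)) = 0" using le by linarith
    then have "\<forall>w\<in>Vert G. K G \<rho> \<tau> x w * (M - h w) = 0"
      by (subst (asm) sum_nonneg_eq_0_iff[OF finV]) (use nn in auto)
    then have "K G \<rho> \<tau> x z * (M - h z) = 0" using zV by blast
    then have "h z = M" using K by simp
    then show "z \<in> S" using zV unfolding S_def by auto
  qed
  have "S = {}" by (rule closed_empty[OF S cl])
  then show False using x0 unfolding S_def by auto
qed


lemma uu_out: "y \<notin> Vert G - Tgt G \<Longrightarrow> uu G \<rho> \<tau> k y = 0"
  by (cases k) (auto simp: uu.simps)

lemma uu_in: "y \<in> Vert G - Tgt G \<Longrightarrow> uu G \<rho> \<tau> 0 y = 1"
  "y \<in> Vert G - Tgt G \<Longrightarrow> uu G \<rho> \<tau> (Suc k) y = (\<Sum>z\<in>Vert G. K G \<rho> \<tau> y z * uu G \<rho> \<tau> k z)"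
  by (auto simp: uu.simps)

lemma uu_bounds: "0 \<le> uu G \<rho> \<tau> k y \<and> uu G \<rho> \<tau> k y \<le> 1"
proof (induction k arbitrary: y)
  case 0 then show ?case by (simp add: uu.simps)
next
  case (Suc k)
  show ?case
  proof (cases "y \<in> Vert G - Tgt G")
    case True
    have "(\<Sum>z\<in>Vert G. K G \<rho> \<tau> y z * uu G \<rho> \<tau> k z) \<le> (\<Sum>z\<in>Vert G. K G \<rho> \<tau> y z)"
      using Suc K_nonneg by (intro sum_mono) (simp add: mult_left_le)
    moreover have "0 \<le> (\<Sum>z\<in>Vert G. K G \<rho> \<tau> y z * uu G \<rho> \<tau> k z)"
      using Suc K_nonneg by (intro sum_nonneg) simp
    ultimately show ?thesis using True K_sum[OF True] uu_in(2)[OF True] by simp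
  qed (simp add: uu_out)
qed

lemma uu_mono: "uu G \<rho> \<tau> (Suc k) y \<le> uu G \<rho> \<tau> k y"
proof (induction k arbitrary: y)
  case 0
  show ?case
  proof (cases "y \<in> Vert G - Tgt G")
    case True then show ?thesis using uu_bounds[of 1 y] uu_in(1)[OF True] by simp
  qed (simp add: uu_out)
next
  case (Suc k)
  show ?case
  proof (cases "y \<in> Vert G - Tgt G")
    case True
    have "(\<Sum>z\<in>Vert G. K G \<rho> \<tau> y z * uu G \<rho> \<tau> (Suc k) z) \<le> (\<Sum>z\<in>Vert G. K G \<rho> \<tau> y z * uu G \<rho> \<tau> k z)"
      using Suc K_nonneg by (intro sum_mono mult_left_mono) auto
    then show ?thesis using True by (simp add: uu_in)
  qed (simp add: uu_out)
qed

lemma uu_shift: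
  assumes "\<forall>z. uu G \<rho> \<tau> a z \<le> M"
  shows "uu G \<rho> \<tau> (b + a) y \<le> M * uu G \<rho> \<tau> b y"
proof (induction b arbitrary: y)
  case 0
  show ?case
  proof (cases "y \<in> Vert G - Tgt G")
    case True then show ?thesis using assms by (simp add: uu_in)
  next
    case False
    then have "uu G \<rho> \<tau> (0 + a) y = 0" "uu G \<rho> \<tau> 0 y = 0" using uu_out by blast+
    then show ?thesis by simp
  qed
next
  case (Suc b)
  show ?case
  proof (cases "y \<in> Vert G - Tgt G")
    case True
    have "(\<Sum>z\<in>Vert G. K G \<rho> \<tau> y z * uu G \<rho> \<tau> (b + a) z) \<le> (\<Sum>z\<in>Vert G. K G \<rho> \<tau> y z * (M * uu G \<rho> \<tau> b z))"
      using Suc K_nonneg by (intro sum_mono mult_left_mono) auto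
    then show ?thesis using True by (simp add: uu_in sum_distrib_left algebra_simps)
  qed (simp add: uu_out)
qed

definition ZZ :: "nat \<Rightarrow> 'v set" where "ZZ k = {y\<in>Vert G. uu G \<rho> \<tau> k y = 1}"

lemma ZZ_N: "ZZ k \<subseteq> Vert G - Tgt G"
  unfolding ZZ_def using uu_out by fastforce

lemma ZZ_mono: "ZZ (Suc k) \<subseteq> ZZ k"
proof
  fix x assume "x \<in> ZZ (Suc k)"
  then have x: "x \<in> Vert G" "uu G \<rho> \<tau> (Suc k) x = 1" unfolding ZZ_def by auto
  have "uu G \<rho> \<tau> k x = 1" using uu_mono[of k x] uu_bounds[of k x] x by linarith
  then show "x \<in> ZZ k" using x unfolding ZZ_def by auto
qed

lemma ZZ_closed:
  assumes eq: "ZZ (Suc k) = ZZ k"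
  shows "\<forall>x\<in>ZZ k. \<forall>z. K G \<rho> \<tau> x z \<noteq> 0 \<longrightarrow> z \<in> ZZ k"
proof (intro ballI allI impI)
  fix x z assume x: "x \<in> ZZ k" and K: "K G \<rho> \<tau> x z \<noteq> 0"
  have xN: "x \<in> Vert G - Tgt G" using x ZZ_N by auto
  have zV: "z \<in> Vert G" using K_edge[OF xN K] succs_V by auto
  have "x \<in> ZZ (Suc k)" using x eq by simp
  then have "uu G \<rho> \<tau> (Suc k) x = 1" unfolding ZZ_def by auto
  then have s1: "(\<Sum>w\<in>Vert G. K G \<rho> \<tau> x w * uu G \<rho> \<tau> k w) = 1" using xN by (simp add: uu_in)
  have "(\<Sum>w\<in>Vert G. K G \<rho> \<tau> x w * (1 - uu G \<rho> \<tau> k w)) = (\<Sum>w\<in>Vert G. K G \<rho> \<tau> x w) - (\<Sum>w\<in>Vert G. K G \<rho> \<tau> x w * uu G \<rho> \<tau> k w)"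
    by (simp add: algebra_simps sum_subtractf)
  also have "\<dots> = 0" using s1 K_sum[OF xN] by simp
  finally have s0: "(\<Sum>w\<in>Vert G. K G \<rho> \<tau> x w * (1 - uu G \<rho> \<tau> k w)) = 0" .
  have nn: "\<forall>w\<in>Vert G. 0 \<le> K G \<rho> \<tau> x w * (1 - uu G \<rho> \<tau> k w)" using uu_bounds K_nonneg by auto
  have "\<forall>w\<in>Vert G. K G \<rho> \<tau> x w * (1 - uu G \<rho> \<tau> k w) = 0"
    using s0 by (subst (asm) sum_nonneg_eq_0_iff[OF finV]) (use nn in auto)
  then have "K G \<rho> \<tau> x z * (1 - uu G \<rho> \<tau> k z) = 0" using zV by blast
  then have "uu G \<rho> \<tau> k z = 1" using K by simp
  then show "z \<in> ZZ k" using zV unfolding ZZ_def by auto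
qed

lemma ZZ_card: "ZZ k = {} \<or> card (ZZ k) + k \<le> card (Vert G)"
proof (induction k)
  case 0
  have "card (ZZ 0) \<le> card (Vert G)" using ZZ_N finV by (intro card_mono) auto
  then show ?case by simp
next
  case (Suc k)
  show ?case
  proof (cases "ZZ k = {}")
    case True then show ?thesis using ZZ_mono[of k] by auto
  next
    case False
    have ne: "ZZ (Suc k) \<noteq> ZZ k"
      using closed_empty[OF ZZ_N ZZ_closed] False by blast
    have fin: "finite (ZZ k)" using ZZ_N finV finite_subset by blast
    have "ZZ (Suc k) \<subset> ZZ k" using ne ZZ_mono by auto
    then have "card (ZZ (Suc k)) < card (ZZ k)" by (rule psubset_card_mono[OF fin])
    then show ?thesis using Suc False by auto
  qed
qed

lemma uu_N_lt1: "uu G \<rho> \<tau> (card (Vert G)) y < 1"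
proof -
  have fin: "finite (ZZ (card (Vert G)))" using ZZ_N finV finite_subset by blast
  have "ZZ (card (Vert G)) = {}" using ZZ_card[of "card (Vert G)"] fin by auto
  then have "y \<in> Vert G \<Longrightarrow> uu G \<rho> \<tau> (card (Vert G)) y \<noteq> 1" unfolding ZZ_def by auto
  moreover have "y \<notin> Vert G \<Longrightarrow> uu G \<rho> \<tau> (card (Vert G)) y = 0" using uu_out by auto
  ultimately show ?thesis using uu_bounds[of "card (Vert G)" y] by fastforce
qed

definition cc :: real where "cc = Max (insert 0 (uu G \<rho> \<tau> (card (Vert G)) ` Vert G))"

lemma cc_props: "0 \<le> cc" "cc < 1" "\<forall>z. uu G \<rho> \<tau> (card (Vert G)) z \<le> cc"
proof -
  have fin: "finite (insert 0 (uu G \<rho> \<tau> (card (Vert G)) ` Vert G))" using finV by simp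
  show "0 \<le> cc" unfolding cc_def using fin by simp
  have "cc \<in> insert 0 (uu G \<rho> \<tau> (card (Vert G)) ` Vert G)" unfolding cc_def using fin by (intro Max_in) auto
  then show "cc < 1" using uu_N_lt1 by auto
  show "\<forall>z. uu G \<rho> \<tau> (card (Vert G)) z \<le> cc"
  proof
    fix z show "uu G \<rho> \<tau> (card (Vert G)) z \<le> cc"
    proof (cases "z \<in> Vert G")
      case True then show ?thesis unfolding cc_def using fin by (intro Max_ge) auto
    next
      case False then show ?thesis using uu_out \<open>0 \<le> cc\<close> by simp
    qed
  qed
qed

lemma phi_nonneg: "0 \<le> phi G \<rho> \<tau> n y"
  unfolding phi_def using uu_bounds by (simp add: sum_nonneg)

lemma phi_bound: "phi G \<rho> \<tau> n y \<le> real (card (Vert G)) / (1 - cc)"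
proof (induction n arbitrary: y rule: less_induct)
  case (less n)
  define N where "N = card (Vert G)"
  have c: "0 \<le> cc" "cc < 1" using cc_props by auto
  have NB: "real N \<le> real N / (1 - cc)" using c by (simp add: le_divide_eq mult_left_le)
  have N0: "N = 0 \<Longrightarrow> phi G \<rho> \<tau> n y = 0"
  proof -
    assume "N = 0"
    then have "Vert G = {}" using finV N_def by simp
    then show ?thesis unfolding phi_def using uu_out by simp
  qed
  show ?case
  proof (cases "n < N \<or> N = 0")
    case True
    show ?thesis
    proof (cases "N = 0")
      case True then show ?thesis using N0 N_def by simp
    next
      case False
      then have "n < N" using \<open>n < N \<or> N = 0\<close> by simp
    have "phi G \<rho> \<tau> n y \<le> (\<Sum>k<n. (1::real))" unfolding phi_def using uu_bounds by (intro sum_mono) auto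
    also have "\<dots> \<le> real N" using \<open>n < N\<close> by simp
    finally show ?thesis using NB N_def by simp
    qed
  next
    case False
    then obtain m where m: "n = m + N" by (metis add.commute le_add_diff_inverse not_less)
    have "phi G \<rho> \<tau> n y = (\<Sum>k<N. uu G \<rho> \<tau> k y) + (\<Sum>k<m. uu G \<rho> \<tau> (k + N) y)"
      unfolding phi_def m by (rule sum_lessThan_add)
    also have "\<dots> \<le> (\<Sum>k<N. (1::real)) + (\<Sum>k<m. cc * uu G \<rho> \<tau> k y)"
      using uu_bounds uu_shift[OF cc_props(3)] N_def by (intro add_mono sum_mono) auto
    also have "\<dots> = real N + cc * phi G \<rho> \<tau> m y" by (simp add: phi_def sum_distrib_left)
    also have "\<dots> \<le> real N + cc * (real N / (1 - cc))"
    proof -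
      have "m < n" using m False by auto
      then have "phi G \<rho> \<tau> m y \<le> real N / (1 - cc)" using less[of m y] N_def by simp
      then show ?thesis using c by (intro add_left_mono mult_left_mono) auto
    qed
    also have "\<dots> = real N / (1 - cc)" using c by (simp add: field_simps)
    finally show ?thesis using N_def by simp
  qed
qed

lemma phi_Suc: "y \<in> Vert G - Tgt G \<Longrightarrow> phi G \<rho> \<tau> (Suc n) y = 1 + (\<Sum>z\<in>Vert G. K G \<rho> \<tau> y z * phi G \<rho> \<tau> n z)"
  unfolding phi_def by (simp add: uu_in sum.lessThan_Suc_shift sum_distrib_left sum.swap[of _ "Vert G"] del: sum.lessThan_Suc)


lemma reach_summ: "y \<in> Vert G \<Longrightarrow> path_prob G \<rho> \<tau> summable_on {p. is_play G y p}"
proof (rule ccontr)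
  assume y: "y \<in> Vert G" and ns: "\<not> path_prob G \<rho> \<tau> summable_on {p. is_play G y p}"
  have "reach_prob G \<rho> \<tau> y = 0" unfolding reach_prob_def by (rule infsum_not_exists[OF ns])
  then show False using reach y by simp
qed

lemma sum_prob_le1:
  assumes "y \<in> Vert G" "finite Q" "Q \<subseteq> {p. is_play G y p}"
  shows "(\<Sum>q\<in>Q. path_prob G \<rho> \<tau> q) \<le> 1"
proof -
  have "(\<Sum>q\<in>Q. path_prob G \<rho> \<tau> q) \<le> infsum (path_prob G \<rho> \<tau>) {p. is_play G y p}"
    using assms reach_summ path_prob_nonneg by (intro finite_sum_le_infsum) auto
  then show ?thesis using reach assms unfolding reach_prob_def by simp
qed

lemma play_decomp:
  assumes y: "y \<notin> Tgt G" and p: "is_play G y p"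
  shows "p = y # tl p \<and> tl p \<noteq> [] \<and> hd (tl p) \<in> succs G y \<and> is_play G (hd (tl p)) (tl p)"
proof -
  have "p \<in> (\<Union>z\<in>succs G y. Cons y ` {q. is_play G z q})" using plays_NT[OF y] p by blast
  then obtain z q where z: "z \<in> succs G y" "is_play G z q" "p = y # q" by auto
  then show ?thesis using is_play_ne[OF z(2)] by auto
qed

lemma FB: "\<forall>y\<in>Vert G. \<forall>F. finite F \<longrightarrow> F \<subseteq> {p. is_play G y p} \<longrightarrow> (\<forall>p\<in>F. length p \<le> Suc n) \<longrightarrow>
   (\<Sum>p\<in>F. path_prob G \<rho> \<tau> p * real (length p - 1)) \<le> phi G \<rho> \<tau> n y"
proof (induction n)
  case 0
  show ?case
  proof (intro ballI allI impI)
    fix y F assume "finite F" "F \<subseteq> {p. is_play G y p}" "\<forall>p\<in>F. length p \<le> Suc 0"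
    then have "\<forall>p\<in>F. length p - 1 = 0" by auto
    then show "(\<Sum>p\<in>F. path_prob G \<rho> \<tau> p * real (length p - 1)) \<le> phi G \<rho> \<tau> 0 y"
      by (simp add: phi_def)
  qed
next
  case (Suc n)
  show ?case
  proof (intro ballI allI impI)
    fix y F assume yV: "y \<in> Vert G" and fF: "finite F" and FP: "F \<subseteq> {p. is_play G y p}"
      and Fl: "\<forall>p\<in>F. length p \<le> Suc (Suc n)"
    show "(\<Sum>p\<in>F. path_prob G \<rho> \<tau> p * real (length p - 1)) \<le> phi G \<rho> \<tau> (Suc n) y"
    proof (cases "y \<in> Tgt G")
      case True
      then have "F \<subseteq> {[y]}" using FP plays_Tgt[OF True] by simp
      then have "\<forall>p\<in>F. length p - 1 = 0" by auto
      then show ?thesis using phi_nonneg by simp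
    next
      case False
      have yN: "y \<in> Vert G - Tgt G" using yV False by simp
      define f where "f p = path_prob G \<rho> \<tau> p * real (length p - 1)" for p
      define Q where "Q = tl ` F"
      have dec1: "\<And>p. p \<in> F \<Longrightarrow> p = y # tl p"
        using play_decomp[OF False] FP by blast
      have dec2: "\<And>p. p \<in> F \<Longrightarrow> tl p \<noteq> [] \<and> hd (tl p) \<in> succs G y \<and> is_play G (hd (tl p)) (tl p)"
        using play_decomp[OF False] FP by blast
      have FQ: "F = Cons y ` Q" unfolding Q_def
      proof safe
        fix p assume p: "p \<in> F"
        show "p \<in> Cons y ` tl ` F" by (rule rev_image_eqI[of "tl p"]) (use p dec1[OF p] in blast)+
      next
        fix p assume p: "p \<in> F"
        then show "y # tl p \<in> F" by (subst dec1[OF p, symmetric])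
      qed
      have fQ: "finite Q" unfolding Q_def using fF by simp
      have Qp: "\<And>q. q \<in> Q \<Longrightarrow> q \<noteq> [] \<and> hd q \<in> succs G y \<and> is_play G (hd q) q \<and> length q \<le> Suc n"
      proof -
        fix q assume "q \<in> Q"
        then obtain p where p: "p \<in> F" "q = tl p" unfolding Q_def by blast
        have "length q \<le> Suc n" using Fl p by fastforce
        then show "q \<noteq> [] \<and> hd q \<in> succs G y \<and> is_play G (hd q) q \<and> length q \<le> Suc n"
          using dec2[OF p(1)] p(2) by simp
      qed
      have fs: "finite (succs G y)" using succs_V finV finite_subset by blast
      have "(\<Sum>p\<in>F. f p) = (\<Sum>q\<in>Q. f (y # q))" unfolding FQ by (simp add: sum.reindex)
      also have "\<dots> = (\<Sum>q\<in>Q. K G \<rho> \<tau> y (hd q) * (path_prob G \<rho> \<tau> q * (1 + real (length q - 1))))"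
      proof (intro sum.cong refl)
        fix q assume q: "q \<in> Q"
        then have "q \<noteq> []" using Qp by blast
        then show "f (y # q) = K G \<rho> \<tau> y (hd q) * (path_prob G \<rho> \<tau> q * (1 + real (length q - 1)))"
          unfolding f_def by (simp add: path_prob_Cons Suc_leI)
      qed
      also have "\<dots> = (\<Sum>z\<in>succs G y. \<Sum>q\<in>{q\<in>Q. hd q = z}. K G \<rho> \<tau> y (hd q) * (path_prob G \<rho> \<tau> q * (1 + real (length q - 1))))"
        using Qp by (intro sum.group[symmetric] fQ fs) auto
      also have "\<dots> \<le> (\<Sum>z\<in>succs G y. K G \<rho> \<tau> y z * (1 + phi G \<rho> \<tau> n z))"
      proof (intro sum_mono)
        fix z assume z: "z \<in> succs G y"
        have zV: "z \<in> Vert G" using z succs_V by blast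
        define Qz where "Qz = {q\<in>Q. hd q = z}"
        have fQz: "finite Qz" using fQ unfolding Qz_def by simp
        have Qzp: "Qz \<subseteq> {p. is_play G z p}" unfolding Qz_def using Qp by auto
        have Qzl: "\<forall>p\<in>Qz. length p \<le> Suc n" unfolding Qz_def using Qp by blast
        have IHz: "(\<Sum>q\<in>Qz. path_prob G \<rho> \<tau> q * real (length q - 1)) \<le> phi G \<rho> \<tau> n z"
          using Suc zV fQz Qzp Qzl by blast
        have "(\<Sum>q\<in>Qz. K G \<rho> \<tau> y (hd q) * (path_prob G \<rho> \<tau> q * (1 + real (length q - 1))))
            = K G \<rho> \<tau> y z * ((\<Sum>q\<in>Qz. path_prob G \<rho> \<tau> q) + (\<Sum>q\<in>Qz. path_prob G \<rho> \<tau> q * real (length q - 1)))"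
          unfolding Qz_def by (simp add: sum_distrib_left sum.distrib algebra_simps)
        also have "\<dots> \<le> K G \<rho> \<tau> y z * (1 + phi G \<rho> \<tau> n z)"
          using sum_prob_le1[OF zV fQz Qzp] IHz K_nonneg
          by (intro mult_left_mono add_mono) auto
        finally show "(\<Sum>q\<in>{q\<in>Q. hd q = z}. K G \<rho> \<tau> y (hd q) * (path_prob G \<rho> \<tau> q * (1 + real (length q - 1))))
            \<le> K G \<rho> \<tau> y z * (1 + phi G \<rho> \<tau> n z)" unfolding Qz_def .
      qed
      also have "\<dots> = (\<Sum>z\<in>Vert G. K G \<rho> \<tau> y z * (1 + phi G \<rho> \<tau> n z))"
        using K_edge[OF yN] by (intro sum.mono_neutral_left finV succs_V) auto
      also have "\<dots> = phi G \<rho> \<tau> (Suc n) y"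
        using phi_Suc[OF yN] K_sum[OF yN] by (simp add: algebra_simps sum.distrib)
      finally show ?thesis unfolding f_def .
    qed
  qed
qed

lemma summ_steps: "y \<in> Vert G \<Longrightarrow> (\<lambda>p. path_prob G \<rho> \<tau> p * real (length p - 1)) summable_on {p. is_play G y p}"
proof (rule nonneg_bdd_above_summable_on)
  fix p show "0 \<le> path_prob G \<rho> \<tau> p * real (length p - 1)" using path_prob_nonneg by simp
next
  assume yV: "y \<in> Vert G"
  show "bdd_above (sum (\<lambda>p. path_prob G \<rho> \<tau> p * real (length p - 1)) ` {F. F \<subseteq> {p. is_play G y p} \<and> finite F})"
  proof (rule bdd_aboveI2)
    fix F assume F: "F \<in> {F. F \<subseteq> {p. is_play G y p} \<and> finite F}"
    define n where "n = Max (insert 0 (length ` F))"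
    have "\<forall>p\<in>F. length p \<le> Suc n" unfolding n_def using F by (auto intro: le_SucI)
    then have "(\<Sum>p\<in>F. path_prob G \<rho> \<tau> p * real (length p - 1)) \<le> phi G \<rho> \<tau> n y"
      using FB[of n] yV F by blast
    also have "\<dots> \<le> real (card (Vert G)) / (1 - cc)" by (rule phi_bound)
    finally show "(\<Sum>p\<in>F. path_prob G \<rho> \<tau> p * real (length p - 1)) \<le> real (card (Vert G)) / (1 - cc)" .
  qed
qed


definition WW :: real where
  "WW = Max (insert 0 ((\<lambda>e. \<bar>real_of_int (wt G (fst e) (snd e))\<bar>) ` Ed G))"

lemma finE: "finite (Ed G)"
proof -
  have "Ed G \<subseteq> Vert G \<times> Vert G" using edge_V by auto
  then show ?thesis using finV finite_subset by blast
qed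

lemma WW_ge: "(a, b) \<in> Ed G \<Longrightarrow> \<bar>real_of_int (wt G a b)\<bar> \<le> WW"
  unfolding WW_def using finE by (intro Max_ge) force+

lemma WW_nonneg: "0 \<le> WW"
  unfolding WW_def using finE by (intro Max_ge) auto

lemma weight_bound:
  assumes "is_path (Ed G) p"
  shows "\<bar>real_of_int (path_weight G p)\<bar> \<le> WW * real (length p - 1)"
proof -
  have "\<bar>real_of_int (path_weight G p)\<bar> = \<bar>\<Sum>i<length p - 1. real_of_int (wt G (p ! i) (p ! Suc i))\<bar>"
    unfolding path_weight_def by simp
  also have "\<dots> \<le> (\<Sum>i<length p - 1. \<bar>real_of_int (wt G (p ! i) (p ! Suc i))\<bar>)" by (rule sum_abs)
  also have "\<dots> \<le> (\<Sum>i<length p - 1. WW)"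
  proof (intro sum_mono)
    fix i assume "i \<in> {..<length p - 1}"
    then have "(p ! i, p ! Suc i) \<in> Ed G" using assms unfolding is_path_def by auto
    then show "\<bar>real_of_int (wt G (p ! i) (p ! Suc i))\<bar> \<le> WW" by (rule WW_ge)
  qed
  finally show ?thesis by (simp add: mult.commute)
qed

lemma summ_w: "y \<in> Vert G \<Longrightarrow> (\<lambda>p. path_prob G \<rho> \<tau> p * real_of_int (path_weight G p)) summable_on {p. is_play G y p}"
proof -
  assume yV: "y \<in> Vert G"
  have s1: "(\<lambda>p. WW * (path_prob G \<rho> \<tau> p * real (length p - 1))) summable_on {p. is_play G y p}"
    using summ_steps[OF yV] by (rule summable_on_cmult_right)
  then have s2: "(\<lambda>p. norm (WW * (path_prob G \<rho> \<tau> p * real (length p - 1)))) summable_on {p. is_play G y p}"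
    by (rule summable_on_iff_abs_summable_on_real[THEN iffD1])
  have "(\<lambda>p. norm (path_prob G \<rho> \<tau> p * real_of_int (path_weight G p))) summable_on {p. is_play G y p}"
  proof (rule Infinite_Sum.abs_summable_on_comparison_test[OF s2])
    fix p assume "p \<in> {p. is_play G y p}"
    then have pp: "is_path (Ed G) p" by (simp add: is_play_def)
    have "norm (path_prob G \<rho> \<tau> p * real_of_int (path_weight G p)) = path_prob G \<rho> \<tau> p * \<bar>real_of_int (path_weight G p)\<bar>"
      using path_prob_nonneg by (simp add: abs_mult)
    also have "\<dots> \<le> path_prob G \<rho> \<tau> p * (WW * real (length p - 1))"
      using weight_bound[OF pp] path_prob_nonneg by (intro mult_left_mono) auto
    also have "\<dots> = norm (WW * (path_prob G \<rho> \<tau> p * real (length p - 1)))"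
      using path_prob_nonneg WW_nonneg by (simp add: abs_mult)
    finally show "norm (path_prob G \<rho> \<tau> p * real_of_int (path_weight G p)) \<le> norm (WW * (path_prob G \<rho> \<tau> p * real (length p - 1)))" .
  qed
  then show ?thesis by (rule summable_on_iff_abs_summable_on_real[THEN iffD2])
qed

lemma EE_T: "y \<in> Tgt G \<Longrightarrow> EE G \<rho> \<tau> y = 0"
proof -
  assume "y \<in> Tgt G"
  then show ?thesis unfolding EE_def plays_Tgt[OF \<open>y \<in> Tgt G\<close>] by simp
qed

lemma Bellman:
  assumes yN: "y \<in> Vert G - Tgt G"
  shows "EE G \<rho> \<tau> y = (\<Sum>z\<in>Vert G. K G \<rho> \<tau> y z * (real_of_int (wt G y z) + EE G \<rho> \<tau> z))"
proof -
  define f where "f p = path_prob G \<rho> \<tau> p * real_of_int (path_weight G p)" for p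
  have fs: "finite (succs G y)" using succs_V finV finite_subset by blast
  have each: "(f has_sum (K G \<rho> \<tau> y z * (real_of_int (wt G y z) + EE G \<rho> \<tau> z))) (Cons y ` {q. is_play G z q})"
    if z: "z \<in> succs G y" for z
  proof -
    have zV: "z \<in> Vert G" using z succs_V by blast
    have h1: "(f has_sum EE G \<rho> \<tau> z) {q. is_play G z q}"
      unfolding f_def EE_def using summ_w[OF zV] by (rule has_sum_infsum)
    have h2: "(path_prob G \<rho> \<tau> has_sum 1) {q. is_play G z q}"
      using has_sum_infsum[OF reach_summ[OF zV]] reach zV unfolding reach_prob_def by simp
    have h3: "((\<lambda>q. K G \<rho> \<tau> y z * (real_of_int (wt G y z) * path_prob G \<rho> \<tau> q + f q)) has_sum
        (K G \<rho> \<tau> y z * (real_of_int (wt G y z) * 1 + EE G \<rho> \<tau> z))) {q. is_play G z q}"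
      by (intro has_sum_cmult_right has_sum_add h1 h2)
    have h4: "((f \<circ> Cons y) has_sum (K G \<rho> \<tau> y z * (real_of_int (wt G y z) + EE G \<rho> \<tau> z))) {q. is_play G z q}"
    proof -
      have "((f \<circ> Cons y) has_sum (K G \<rho> \<tau> y z * (real_of_int (wt G y z) * 1 + EE G \<rho> \<tau> z))) {q. is_play G z q}"
      proof (subst has_sum_cong)
        fix q assume "q \<in> {q. is_play G z q}"
        then have q: "q \<noteq> []" "hd q = z" using is_play_ne[of G z q] by auto
        show "(f \<circ> Cons y) q = K G \<rho> \<tau> y z * (real_of_int (wt G y z) * path_prob G \<rho> \<tau> q + f q)"
          unfolding f_def using q by (simp add: path_prob_Cons path_weight_Cons algebra_simps)
      qed (rule h3)
      then show ?thesis by simp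
    qed
    have inj: "inj_on (Cons y) {q. is_play G z q}" by (simp add: inj_on_def)
    show ?thesis using has_sum_reindex[OF inj, of f] h4 by simp
  qed
  have disj: "Cons y ` {q. is_play G z q} \<inter> Cons y ` {q. is_play G z' q} = {}"
    if "z \<in> succs G y" "z' \<in> succs G y" "z \<noteq> z'" for z z'
  proof -
    have "\<forall>q. \<not> (is_play G z q \<and> is_play G z' q)"
    proof (intro allI notI)
      fix q assume "is_play G z q \<and> is_play G z' q"
      then have "hd q = z" "hd q = z'" using is_play_ne[of G z q] is_play_ne[of G z' q] by auto
      then show False using that(3) by simp
    qed
    then show ?thesis by auto
  qed
  have "(f has_sum (\<Sum>z\<in>succs G y. K G \<rho> \<tau> y z * (real_of_int (wt G y z) + EE G \<rho> \<tau> z)))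
      (\<Union>z\<in>succs G y. Cons y ` {q. is_play G z q})"
    by (rule sum_has_sum[OF fs each disj])
  moreover have yT: "y \<notin> Tgt G" using yN by simp
  ultimately have "(f has_sum (\<Sum>z\<in>succs G y. K G \<rho> \<tau> y z * (real_of_int (wt G y z) + EE G \<rho> \<tau> z))) {p. is_play G y p}"
    by (subst plays_NT[OF yT]) simp
  then have "infsum f {p. is_play G y p} = (\<Sum>z\<in>succs G y. K G \<rho> \<tau> y z * (real_of_int (wt G y z) + EE G \<rho> \<tau> z))"
    by (rule infsumI)
  moreover have "EE G \<rho> \<tau> y = infsum f {p. is_play G y p}" unfolding EE_def f_def by simp
  ultimately have "EE G \<rho> \<tau> y = (\<Sum>z\<in>succs G y. K G \<rho> \<tau> y z * (real_of_int (wt G y z) + EE G \<rho> \<tau> z))"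
    by simp
  also have "\<dots> = (\<Sum>z\<in>Vert G. K G \<rho> \<tau> y z * (real_of_int (wt G y z) + EE G \<rho> \<tau> z))"
    using K_edge[OF yN] by (intro sum.mono_neutral_left finV succs_V) auto
  finally show ?thesis .
qed

lemma exp_eq: "y \<in> Vert G \<Longrightarrow> exp_TP G \<rho> \<tau> y = ereal (EE G \<rho> \<tau> y)"
  using reach unfolding exp_TP_def EE_def by simp

end

end


lemma is_path_Cons: "q \<noteq> [] \<Longrightarrow> is_path E (a # q) \<longleftrightarrow> (a, hd q) \<in> E \<and> is_path E q"
  unfolding is_path_def by (subst all_Suc_split) (simp add: hd_conv_nth)

lemma telescope:
  fixes g :: "'v \<Rightarrow> real"
  assumes edge: "\<And>a b. (a, b) \<in> E \<Longrightarrow> real_of_int (wt H a b) + g b \<le> g a"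
  shows "is_path E p \<Longrightarrow> real_of_int (path_weight H p) \<le> g (hd p) - g (last p)"
proof (induction p)
  case Nil then show ?case by (simp add: is_path_def)
next
  case (Cons a q)
  show ?case
  proof (cases "q = []")
    case True then show ?thesis by simp
  next
    case False
    have epq: "(a, hd q) \<in> E \<and> is_path E q" using Cons.prems is_path_Cons[OF False] by simp
    then have e: "(a, hd q) \<in> E" and pq: "is_path E q" by auto
    have "real_of_int (path_weight H (a # q)) = real_of_int (wt H a (hd q)) + real_of_int (path_weight H q)"
      using False by (simp add: path_weight_Cons)
    also have "\<dots> \<le> real_of_int (wt H a (hd q)) + (g (hd q) - g (last q))" using Cons.IH[OF pq] by simp
    also have "\<dots> \<le> g a - g (last q)" using edge[OF e] by simp
    finally show ?thesis using False by simp
  qed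
qed

lemma K_nn: "0 \<le> K G \<rho> \<tau> x y"
  by (simp add: K_def)

lemma sum_return:
  fixes F :: "'v \<Rightarrow> real"
  assumes "finite A" "y \<in> A"
  shows "(\<Sum>z\<in>A. pmf (return_pmf y) z * F z) = F y"
proof -
  have "(\<Sum>z\<in>A. pmf (return_pmf y) z * F z) = (\<Sum>z\<in>A. if z = y then F y else 0)"
    by (intro sum.cong refl) (simp add: pmf_return indicator_def)
  also have "\<dots> = F y" using assms by (simp add: sum.delta')
  finally show ?thesis .
qed

theorem lemma19:
  fixes G :: "'v game" and \<rho> :: "'v \<Rightarrow> 'v pmf"
  assumes "sp_game G"
    and "\<forall>v \<in> Vert G. Val_d G v \<noteq> \<infinity>"
    and "\<forall>v \<in> Vert G. Val_m_bar G v \<noteq> \<infinity>"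
    and "ml_strat G (VMin G) \<rho>"
    and "\<forall>v \<in> Vert G. \<forall>\<tau>. ml_strat G (VMax G) \<tau> \<longrightarrow> reach_prob G \<rho> \<tau> v = 1"
  shows "(\<forall>v \<in> Vert G. \<forall>p. is_play (tilde_game G \<rho>) v p
            \<longrightarrow> ereal (real_of_int (path_weight (tilde_game G \<rho>) p)) \<le> Val_m_rho G \<rho> v)
       \<and> (\<forall>p. is_cycle (tilde_game G \<rho>) p \<longrightarrow> path_weight (tilde_game G \<rho>) p \<le> 0)"
proof -
  note sp = assms(1) and mr = assms(4)
  have reachall: "\<And>\<tau>. ml_strat G (VMax G) \<tau> \<Longrightarrow> \<forall>v\<in>Vert G. reach_prob G \<rho> \<tau> v = 1"
    using assms(5) by blast
  have finV: "finite (Vert G)" using sp by (simp add: sp_game_def)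
  have disj: "VMax G \<inter> VMin G = {}" "VMax G \<inter> Tgt G = {}" "VMin G \<inter> Tgt G = {}"
    using sp by (auto simp: sp_game_def)
  have edgeV: "\<And>x y. (x, y) \<in> Ed G \<Longrightarrow> x \<in> Vert G - Tgt G \<and> y \<in> Vert G"
    using sp by (auto simp: sp_game_def)
  have hassucc: "\<And>x. x \<in> Vert G - Tgt G \<Longrightarrow> \<exists>y. (x, y) \<in> Ed G"
    using sp by (auto simp: sp_game_def)
  have VMaxV: "VMax G \<subseteq> Vert G - Tgt G" using disj by (auto simp: Vert_def)
  have VMinV: "VMin G \<subseteq> Vert G - Tgt G" using disj by (auto simp: Vert_def)
  have NT: "\<And>u. u \<in> Vert G - Tgt G \<Longrightarrow> u \<in> VMin G \<or> u \<in> VMax G" by (auto simp: Vert_def)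

  define tau :: "('v \<Rightarrow> 'v) \<Rightarrow> 'v \<Rightarrow> 'v pmf" where "tau d = (\<lambda>x. return_pmf (d x))" for d
  define D where "D = {d \<in> VMax G \<rightarrow>\<^sub>E Vert G. \<forall>x\<in>VMax G. (x, d x) \<in> Ed G}"
  have mlD: "\<And>d. d \<in> D \<Longrightarrow> ml_strat G (VMax G) (tau d)"
    unfolding D_def tau_def ml_strat_def by auto
  have finD: "finite D"
  proof -
    have "VMax G \<subseteq> Vert G" using VMaxV by blast
    then have "finite (VMax G)" using finV by (rule finite_subset)
    then have "finite (VMax G \<rightarrow>\<^sub>E Vert G)" using finV by (rule finite_PiE)
    then show ?thesis unfolding D_def by simp
  qed
  define d0 where "d0 = restrict (\<lambda>x. SOME y. (x, y) \<in> Ed G) (VMax G)"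
  have d0D: "d0 \<in> D"
  proof -
    have se: "(x, SOME y. (x, y) \<in> Ed G) \<in> Ed G" if x: "x \<in> VMax G" for x
    proof -
      have "\<exists>y. (x, y) \<in> Ed G" using hassucc VMaxV x by blast
      then show ?thesis by (rule someI_ex)
    qed
    have sv: "(SOME y. (x, y) \<in> Ed G) \<in> Vert G" if x: "x \<in> VMax G" for x
      using edgeV[OF se[OF x]] by simp
    have "d0 \<in> VMax G \<rightarrow>\<^sub>E Vert G" unfolding d0_def using sv by (simp add: PiE_def Pi_def)
    moreover have "\<forall>x\<in>VMax G. (x, d0 x) \<in> Ed G" unfolding d0_def using se by simp
    ultimately show ?thesis unfolding D_def by blast
  qed
  define S where "S d = (\<Sum>v\<in>Vert G. EE G \<rho> (tau d) v)" for d
  have "Max (S ` D) \<in> S ` D" using finD d0D by (intro Max_in) auto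
  then obtain ds where ds: "ds \<in> D" "S ds = Max (S ` D)" by auto
  have dsmax: "\<And>d. d \<in> D \<Longrightarrow> S d \<le> S ds" unfolding ds(2) using finD by (intro Max_ge) auto
  define ts where "ts = tau ds"
  define g where "g = EE G \<rho> ts"
  have mlts: "ml_strat G (VMax G) ts" unfolding ts_def by (rule mlD[OF ds(1)])
  note reachts = reachall[OF mlts]
  have gT: "\<And>u. u \<in> Tgt G \<Longrightarrow> g u = 0" unfolding g_def using EE_T[OF sp mr mlts reachts] by blast
  have gB: "\<And>u. u \<in> Vert G - Tgt G \<Longrightarrow> g u = (\<Sum>z\<in>Vert G. K G \<rho> ts u z * (real_of_int (wt G u z) + g z))"
    unfolding g_def using Bellman[OF sp mr mlts reachts] by blast

  have opt: "\<And>x y. x \<in> VMax G \<Longrightarrow> (x, y) \<in> Ed G \<Longrightarrow> real_of_int (wt G x y) + g y \<le> g x"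
  proof (rule ccontr)
    fix x y assume x: "x \<in> VMax G" and xy: "(x, y) \<in> Ed G" and lt0: "\<not> real_of_int (wt G x y) + g y \<le> g x"
    then have lt: "g x < real_of_int (wt G x y) + g y" by simp
    have yV: "y \<in> Vert G" using edgeV[OF xy] by simp
    have xV: "x \<in> Vert G" using x VMaxV by auto
    define d' where "d' = ds(x := y)"
    have d'D: "d' \<in> D" using ds(1) x xy yV unfolding D_def d'_def by (auto simp: PiE_def extensional_def)
    define t' where "t' = tau d'"
    have mlt': "ml_strat G (VMax G) t'" unfolding t'_def by (rule mlD[OF d'D])
    note reacht' = reachall[OF mlt']
    define g' where "g' = EE G \<rho> t'"
    have g'T: "\<And>u. u \<in> Tgt G \<Longrightarrow> g' u = 0" unfolding g'_def using EE_T[OF sp mr mlt' reacht'] by blast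
    have g'B: "\<And>u. u \<in> Vert G - Tgt G \<Longrightarrow> g' u = (\<Sum>z\<in>Vert G. K G \<rho> t' u z * (real_of_int (wt G u z) + g' z))"
      unfolding g'_def using Bellman[OF sp mr mlt' reacht'] by blast
    have Keq: "\<And>u z. u \<noteq> x \<Longrightarrow> K G \<rho> t' u z = K G \<rho> ts u z"
      unfolding K_def trans_pmf_def t'_def ts_def tau_def d'_def by simp
    have Kx: "\<And>z. K G \<rho> t' x z = pmf (return_pmf y) z"
      using x disj unfolding K_def trans_pmf_def t'_def tau_def d'_def by auto
    have gsub: "\<And>u. u \<in> Vert G - Tgt G \<Longrightarrow> g u \<le> (\<Sum>z\<in>Vert G. K G \<rho> t' u z * (real_of_int (wt G u z) + g z))"
    proof -
      fix u assume u: "u \<in> Vert G - Tgt G"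
      show "g u \<le> (\<Sum>z\<in>Vert G. K G \<rho> t' u z * (real_of_int (wt G u z) + g z))"
      proof (cases "u = x")
        case True
        have "(\<Sum>z\<in>Vert G. K G \<rho> t' u z * (real_of_int (wt G u z) + g z)) = real_of_int (wt G x y) + g y"
          unfolding True Kx by (rule sum_return[OF finV yV])
        then show ?thesis using lt True by simp
      next
        case False
        then show ?thesis using gB[OF u] Keq by simp
      qed
    qed
    have hle: "\<And>v. v \<in> Vert G \<Longrightarrow> g v - g' v \<le> 0"
    proof (rule max_principle[OF sp mr mlt' reacht', of "\<lambda>v. g v - g' v"])
      show "\<forall>u\<in>Vert G. u \<in> Tgt G \<longrightarrow> g u - g' u \<le> 0" using gT g'T by simp
      show "\<forall>u\<in>Vert G - Tgt G. g u - g' u \<le> (\<Sum>z\<in>Vert G. K G \<rho> t' u z * (g z - g' z))"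
      proof
        fix u assume u: "u \<in> Vert G - Tgt G"
        have "g u - g' u \<le> (\<Sum>z\<in>Vert G. K G \<rho> t' u z * (real_of_int (wt G u z) + g z)) - (\<Sum>z\<in>Vert G. K G \<rho> t' u z * (real_of_int (wt G u z) + g' z))"
          using gsub[OF u] g'B[OF u] by simp
        also have "\<dots> = (\<Sum>z\<in>Vert G. K G \<rho> t' u z * (g z - g' z))"
          by (simp add: sum_subtractf[symmetric] algebra_simps)
        finally show "g u - g' u \<le> (\<Sum>z\<in>Vert G. K G \<rho> t' u z * (g z - g' z))" .
      qed
    qed
    have xN: "x \<in> Vert G - Tgt G" using x VMaxV by auto
    have "g' x = (\<Sum>z\<in>Vert G. K G \<rho> t' x z * (real_of_int (wt G x z) + g' z))" by (rule g'B[OF xN])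
    also have "\<dots> = real_of_int (wt G x y) + g' y" unfolding Kx by (rule sum_return[OF finV yV])
    finally have "g' x \<ge> real_of_int (wt G x y) + g y" using hle[OF yV] by simp
    then have "g x < g' x" using lt by simp
    then have "S ds < S d'"
      unfolding S_def ts_def[symmetric] t'_def[symmetric] g_def[symmetric] g'_def[symmetric]
      using hle xV finV by (intro sum_strict_mono_ex1) auto
    then show False using dsmax[OF d'D] by simp
  qed

  have Vall: "\<And>\<tau> v. ml_strat G (VMax G) \<tau> \<Longrightarrow> v \<in> Vert G \<Longrightarrow> EE G \<rho> \<tau> v \<le> g v"
  proof -
    fix \<tau> v assume mlt: "ml_strat G (VMax G) \<tau>" and v: "v \<in> Vert G"
    note reacht = reachall[OF mlt]
    have Kmin: "\<And>u z. u \<in> VMin G \<Longrightarrow> K G \<rho> \<tau> u z = K G \<rho> ts u z"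
      unfolding K_def trans_pmf_def by simp
    have gsup: "\<And>u. u \<in> Vert G - Tgt G \<Longrightarrow> (\<Sum>z\<in>Vert G. K G \<rho> \<tau> u z * (real_of_int (wt G u z) + g z)) \<le> g u"
    proof -
      fix u assume u: "u \<in> Vert G - Tgt G"
      show "(\<Sum>z\<in>Vert G. K G \<rho> \<tau> u z * (real_of_int (wt G u z) + g z)) \<le> g u"
      proof (cases "u \<in> VMin G")
        case True then show ?thesis using gB[OF u] Kmin by simp
      next
        case False
        then have uM: "u \<in> VMax G" using NT[OF u] by simp
        have "(\<Sum>z\<in>Vert G. K G \<rho> \<tau> u z * (real_of_int (wt G u z) + g z)) \<le> (\<Sum>z\<in>Vert G. K G \<rho> \<tau> u z * g u)"
        proof (intro sum_mono)
          fix z assume z: "z \<in> Vert G"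
          show "K G \<rho> \<tau> u z * (real_of_int (wt G u z) + g z) \<le> K G \<rho> \<tau> u z * g u"
          proof (cases "K G \<rho> \<tau> u z = 0")
            case False
            then have "z \<in> succs G u" using K_edge[OF sp mr mlt u] by blast
            then have "real_of_int (wt G u z) + g z \<le> g u" using opt[OF uM] by (simp add: succs_def)
            then show ?thesis using K_nn by (intro mult_left_mono) auto
          qed simp
        qed
        also have "\<dots> = (\<Sum>z\<in>Vert G. K G \<rho> \<tau> u z) * g u" by (rule sum_distrib_right[symmetric])
        also have "\<dots> = g u" using K_sum[OF sp mr mlt u] by simp
        finally show ?thesis .
      qed
    qed
    have "EE G \<rho> \<tau> v - g v \<le> 0"
    proof (rule max_principle[OF sp mr mlt reacht, of "\<lambda>v. EE G \<rho> \<tau> v - g v"])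
      show "\<forall>u\<in>Vert G. u \<in> Tgt G \<longrightarrow> EE G \<rho> \<tau> u - g u \<le> 0" using gT EE_T[OF sp mr mlt reacht] by simp
      show "\<forall>u\<in>Vert G - Tgt G. EE G \<rho> \<tau> u - g u \<le> (\<Sum>z\<in>Vert G. K G \<rho> \<tau> u z * (EE G \<rho> \<tau> z - g z))"
      proof
        fix u assume u: "u \<in> Vert G - Tgt G"
        have "EE G \<rho> \<tau> u - g u \<le> (\<Sum>z\<in>Vert G. K G \<rho> \<tau> u z * (real_of_int (wt G u z) + EE G \<rho> \<tau> z)) - (\<Sum>z\<in>Vert G. K G \<rho> \<tau> u z * (real_of_int (wt G u z) + g z))"
          using gsup[OF u] Bellman[OF sp mr mlt reacht u] by simp
        also have "\<dots> = (\<Sum>z\<in>Vert G. K G \<rho> \<tau> u z * (EE G \<rho> \<tau> z - g z))"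
          by (simp add: sum_subtractf[symmetric] algebra_simps)
        finally show "EE G \<rho> \<tau> u - g u \<le> (\<Sum>z\<in>Vert G. K G \<rho> \<tau> u z * (EE G \<rho> \<tau> z - g z))" .
      qed
    qed (rule v)
    then show "EE G \<rho> \<tau> v \<le> g v" by simp
  qed

  have Val: "\<And>v. v \<in> Vert G \<Longrightarrow> Val_m_rho G \<rho> v = ereal (g v)"
  proof -
    fix v assume v: "v \<in> Vert G"
    show "Val_m_rho G \<rho> v = ereal (g v)"
      unfolding Val_m_rho_def
    proof (rule antisym)
      show "(SUP \<tau>\<in>{\<tau>. ml_strat G (VMax G) \<tau>}. exp_TP G \<rho> \<tau> v) \<le> ereal (g v)"
      proof (rule SUP_least)
        fix \<tau> assume "\<tau> \<in> {\<tau>. ml_strat G (VMax G) \<tau>}"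
        then have mlt: "ml_strat G (VMax G) \<tau>" by simp
        show "exp_TP G \<rho> \<tau> v \<le> ereal (g v)"
          using exp_eq[OF sp mr mlt reachall[OF mlt] v] Vall[OF mlt v] by simp
      qed
      show "ereal (g v) \<le> (SUP \<tau>\<in>{\<tau>. ml_strat G (VMax G) \<tau>}. exp_TP G \<rho> \<tau> v)"
        using exp_eq[OF sp mr mlts reachts v] mlts unfolding g_def by (intro SUP_upper2[of ts]) auto
    qed
  qed

  have tedge: "\<And>a b. (a, b) \<in> Ed (tilde_game G \<rho>) \<Longrightarrow> real_of_int (wt (tilde_game G \<rho>) a b) + g b \<le> g a"
  proof -
    fix a b assume ab: "(a, b) \<in> Ed (tilde_game G \<rho>)"
    then have abE: "(a, b) \<in> Ed G" and tl: "a \<in> VMin G \<Longrightarrow> b \<in> E_tilde G \<rho> a"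
      unfolding tilde_game_def by auto
    have aN: "a \<in> Vert G - Tgt G" and bV: "b \<in> Vert G" using edgeV[OF abE] by auto
    have wt_eq: "wt (tilde_game G \<rho>) a b = wt G a b" unfolding tilde_game_def by simp
    show "real_of_int (wt (tilde_game G \<rho>) a b) + g b \<le> g a"
    proof (cases "a \<in> VMin G")
      case False
      then have "a \<in> VMax G" using NT[OF aN] by simp
      then show ?thesis using opt abE wt_eq by simp
    next
      case True
      have bE: "b \<in> set_pmf (\<rho> a)" and bmin: "\<forall>u''\<in>set_pmf (\<rho> a). ereal (real_of_int (wt G a b)) + Val_m_rho G \<rho> b \<le> ereal (real_of_int (wt G a u'')) + Val_m_rho G \<rho> u''"
        using tl[OF True] unfolding E_tilde_def by auto
      have suppV: "\<And>z. z \<in> set_pmf (\<rho> a) \<Longrightarrow> z \<in> Vert G"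
        using mr True edgeV unfolding ml_strat_def by blast
      have rmin: "\<And>z. z \<in> set_pmf (\<rho> a) \<Longrightarrow> real_of_int (wt G a b) + g b \<le> real_of_int (wt G a z) + g z"
      proof -
        fix z assume z: "z \<in> set_pmf (\<rho> a)"
        have bz: "ereal (real_of_int (wt G a b)) + Val_m_rho G \<rho> b \<le> ereal (real_of_int (wt G a z)) + Val_m_rho G \<rho> z"
          using bmin z by blast
        have "ereal (real_of_int (wt G a b)) + ereal (g b) \<le> ereal (real_of_int (wt G a z)) + ereal (g z)"
          using bz unfolding Val[OF bV] Val[OF suppV[OF z]] .
        then show "real_of_int (wt G a b) + g b \<le> real_of_int (wt G a z) + g z" by simp
      qed
      have Ka: "\<And>z. K G \<rho> ts a z = pmf (\<rho> a) z" unfolding K_def trans_pmf_def using True by simp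
      have "real_of_int (wt G a b) + g b = (\<Sum>z\<in>Vert G. K G \<rho> ts a z) * (real_of_int (wt G a b) + g b)"
        using K_sum[OF sp mr mlts aN] by simp
      also have "\<dots> = (\<Sum>z\<in>Vert G. K G \<rho> ts a z * (real_of_int (wt G a b) + g b))"
        by (rule sum_distrib_right)
      also have "\<dots> \<le> (\<Sum>z\<in>Vert G. K G \<rho> ts a z * (real_of_int (wt G a z) + g z))"
      proof (intro sum_mono)
        fix z assume "z \<in> Vert G"
        show "K G \<rho> ts a z * (real_of_int (wt G a b) + g b) \<le> K G \<rho> ts a z * (real_of_int (wt G a z) + g z)"
        proof (cases "K G \<rho> ts a z = 0")
          case False
          then have "z \<in> set_pmf (\<rho> a)" using Ka by (simp add: set_pmf_iff)
          then show ?thesis using rmin K_nn by (intro mult_left_mono) auto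
        qed simp
      qed
      also have "\<dots> = g a" using gB[OF aN] by simp
      finally show ?thesis using wt_eq by simp
    qed
  qed
  have tele: "\<And>p. is_path (Ed (tilde_game G \<rho>)) p \<Longrightarrow> real_of_int (path_weight (tilde_game G \<rho>) p) \<le> g (hd p) - g (last p)"
    using telescope[of "Ed (tilde_game G \<rho>)" "tilde_game G \<rho>" g] tedge by blast
  have TT: "Tgt (tilde_game G \<rho>) = Tgt G" unfolding tilde_game_def by simp
  show ?thesis
  proof (intro conjI ballI allI impI)
    fix v p assume v: "v \<in> Vert G" and p: "is_play (tilde_game G \<rho>) v p"
    then have pp: "is_path (Ed (tilde_game G \<rho>)) p" "hd p = v" "last p \<in> Tgt G"
      unfolding is_play_def TT by auto
    have "real_of_int (path_weight (tilde_game G \<rho>) p) \<le> g v"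
      using tele[OF pp(1)] pp gT by simp
    then show "ereal (real_of_int (path_weight (tilde_game G \<rho>) p)) \<le> Val_m_rho G \<rho> v"
      using Val[OF v] by simp
  next
    fix p assume p: "is_cycle (tilde_game G \<rho>) p"
    then have "is_path (Ed (tilde_game G \<rho>)) p" "hd p = last p" unfolding is_cycle_def by auto
    then have "real_of_int (path_weight (tilde_game G \<rho>) p) \<le> 0" using tele by fastforce
    then show "path_weight (tilde_game G \<rho>) p \<le> 0" by simp
  qed
qed

end
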